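(* Let $\Phi=\{\phi_i\}_{i=1}^l$ be an IFS on $\mathbb R^d$ with attractor $X$, let $z\in X$, and let $\Psi:\mathcal D^*\to[0,\infty)$ be weakly decaying with $\max_{\mathbf a\in\mathcal D^n}\Psi(\mathbf a)\to0$. 1. If each $\phi_i$ is a similarity and $W_\Phi(z,\Psi)$ has positive Lebesgue measure, then Lebesgue-a.e. $x\in X$ lies in $W_\Phi(z,\Psi)$. 2. If $\Phi$ is arbitrary and there is a $\sigma$-invariant ergodic probability measure $\mathfrak m$ on $\mathcal D^{\mathbb N}$ whose pushforward $\mu=\mathfrak m\circ\pi^{-1}$ is equivalent to $\mathcal L|_X$ (Lebesgue measure restricted to $X$), and $W_\Phi(z,\Psi)$ has positive Lebesgue measure, then Lebesgue-a.e. $x\in X$ lies in $W_\Phi(z,\Psi)$.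
   Context: $\phi_{\mathbf a}=\phi_{a_1}\circ\cdots\circ\phi_{a_n}$, $\pi((a_j))=\lim_n\phi_{a_1\cdots a_n}(0)$. $W_\Phi(z,\Psi)=\{x:|x-\phi_{\mathbf a}(z)|\le\Psi(\mathbf a)$ for infinitely many $\mathbf a\in\mathcal D^*\}$. $\Psi$ is weakly decaying if $\inf_{\mathbf a\in\mathcal D^*}\min_{i\in\mathcal D}\Psi(i\mathbf a)/\Psi(\mathbf a)>0$. A similarity is a map with $|\phi(x)-\phi(y)|=r|x-y|$ for some $r\in(0,1)$. *)

theory Defs
  imports "HOL-Analysis.Analysis" "HOL-Probability.Probability"
begin

definition words :: "nat \<Rightarrow> nat list set" where
  "words l = {a. set a \<subseteq> {1..l}}"

definition words_n :: "nat \<Rightarrow> nat \<Rightarrow> nat list set" where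
  "words_n l n = {a. set a \<subseteq> {1..l} \<and> length a = n}"

definition phi_word :: "(nat \<Rightarrow> 'a \<Rightarrow> 'a) \<Rightarrow> nat list \<Rightarrow> 'a \<Rightarrow> 'a" where
  "phi_word \<phi> a = foldr (\<lambda>i f. \<phi> i \<circ> f) a id"

definition is_contraction :: "('a::metric_space \<Rightarrow> 'a) \<Rightarrow> bool" where
  "is_contraction f \<longleftrightarrow> (\<exists>r. 0 \<le> r \<and> r < 1 \<and> (\<forall>x y. dist (f x) (f y) \<le> r * dist x y))"

definition is_similarity :: "('a::metric_space \<Rightarrow> 'a) \<Rightarrow> bool" where
  "is_similarity f \<longleftrightarrow> (\<exists>r. 0 < r \<and> r < 1 \<and> (\<forall>x y. dist (f x) (f y) = r * dist x y))"

definition IFS :: "nat \<Rightarrow> (nat \<Rightarrow> 'a::euclidean_space \<Rightarrow> 'a) \<Rightarrow> bool" where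
  "IFS l \<phi> \<longleftrightarrow> l \<ge> 1 \<and> (\<forall>i\<in>{1..l}. is_contraction (\<phi> i))"

definition is_attractor :: "nat \<Rightarrow> (nat \<Rightarrow> 'a::euclidean_space \<Rightarrow> 'a) \<Rightarrow> 'a set \<Rightarrow> bool" where
  "is_attractor l \<phi> X \<longleftrightarrow> X \<noteq> {} \<and> compact X \<and> X = (\<Union>i\<in>{1..l}. \<phi> i ` X)"

text \<open>Coding map; a sequence (a_1,a_2,...) is represented by omega with a_(j+1) = omega j.\<close>
definition coding :: "(nat \<Rightarrow> 'a::euclidean_space \<Rightarrow> 'a) \<Rightarrow> (nat \<Rightarrow> nat) \<Rightarrow> 'a" where
  "coding \<phi> \<omega> = lim (\<lambda>n. phi_word \<phi> (map \<omega> [0..<n]) 0)"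

definition W_set :: "nat \<Rightarrow> (nat \<Rightarrow> 'a::euclidean_space \<Rightarrow> 'a) \<Rightarrow> 'a \<Rightarrow> (nat list \<Rightarrow> real) \<Rightarrow> 'a set" where
  "W_set l \<phi> z \<Psi> = {x. infinite {a \<in> words l. dist x (phi_word \<phi> a z) \<le> \<Psi> a}}"

text \<open>Weakly decaying: inf_a min_i Psi(i a)/Psi(a) > 0, written multiplicatively.\<close>
definition weakly_decaying :: "nat \<Rightarrow> (nat list \<Rightarrow> real) \<Rightarrow> bool" where
  "weakly_decaying l \<Psi> \<longleftrightarrow> (\<exists>c>0. \<forall>a\<in>words l. \<forall>i\<in>{1..l}. \<Psi> (i # a) \<ge> c * \<Psi> a)"

definition seq_space :: "nat \<Rightarrow> (nat \<Rightarrow> nat) measure" where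
  "seq_space l = (\<Pi>\<^sub>M j\<in>UNIV. count_space {1..l})"

definition shift :: "(nat \<Rightarrow> nat) \<Rightarrow> (nat \<Rightarrow> nat)" where
  "shift \<omega> = (\<lambda>n. \<omega> (Suc n))"

definition shift_invariant_ergodic :: "nat \<Rightarrow> (nat \<Rightarrow> nat) measure \<Rightarrow> bool" where
  "shift_invariant_ergodic l m \<longleftrightarrow>
     prob_space m \<and> sets m = sets (seq_space l) \<and>
     shift \<in> measurable m m \<and>
     (\<forall>A\<in>sets m. emeasure m (shift -` A \<inter> space m) = emeasure m A) \<and>
     (\<forall>A\<in>sets m. shift -` A \<inter> space m = A \<longrightarrow> emeasure m A = 0 \<or> emeasure m A = 1)"

end

theory Submission
  imports Defs
begin


lemma map_upt_eq: "(map \<omega> [0..<n] = L) \<longleftrightarrow> (length L = n \<and> (\<forall>j\<in>{..<n}. \<omega> j = L ! j))"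
  by (auto simp: list_eq_iff_nth_eq)

lemma map_measurable: "(\<lambda>\<omega>. map \<omega> [0..<n]) \<in> seq_space l \<rightarrow>\<^sub>M count_space UNIV"
proof (subst measurable_count_space_eq_countable, simp, safe)
  fix L :: "nat list"
  have "(\<lambda>\<omega>. map \<omega> [0..<n]) -` {L} \<inter> space (seq_space l) = {\<omega> \<in> space (seq_space l). length L = n \<and> (\<forall>j\<in>{..<n}. \<omega> j = L ! j)}"
    by (intro set_eqI) (simp add: map_upt_eq conj_commute conj_left_commute)
  also have "\<dots> \<in> sets (seq_space l)"
    unfolding seq_space_def by measurable
  finally show "(\<lambda>\<omega>. map \<omega> [0..<n]) -` {L} \<inter> space (seq_space l) \<in> sets (seq_space l)" .
qed simp

lemma space_seq_space: "space (seq_space l) = {\<omega>. \<forall>j. \<omega> j \<in> {1..l}}"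
  unfolding seq_space_def space_PiM PiE_UNIV_domain Pi_def by simp


lemma density_lemma_bounded:
  fixes T :: "'a::euclidean_space set"
  assumes T: "T \<in> sets lebesgue" and k: "0 < \<kappa>" "\<kappa> \<le> 1"
   and H: "\<And>x r. x \<in> T \<Longrightarrow> 0 < r \<Longrightarrow> \<exists>d. 0<d \<and> d \<le> r \<and>
       measure lebesgue (T \<inter> ball x d) \<le> (1-\<kappa>) * measure lebesgue (ball x d)"
  shows "negligible (T \<inter> ball z R)"
proof -
  let ?\<mu> = "measure lebesgue"
  define S where "S = T \<inter> ball z R"
  have Sm: "S \<in> lmeasurable"
    unfolding S_def by (rule bounded_set_imp_lmeasurable) (auto intro: T)
  have main: "\<kappa> * ?\<mu> S \<le> e" if e: "e > 0" for e
  proof -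
    obtain Q where Q: "open Q" "S \<subseteq> Q" "Q - S \<in> lmeasurable" "emeasure lebesgue (Q - S) < ennreal e"
      using sets_lebesgue_outer_open[of S e] Sm e by blast
    have mOS: "?\<mu> (Q - S) < e"
      using Q(3,4) e by (simp add: emeasure_eq_measure2 ennreal_less_iff)
    define Q' where "Q' = Q \<inter> ball z R"
    have Q'o: "open Q'" using Q(1) by (simp add: Q'_def open_Int)
    have SO': "S \<subseteq> Q'" using Q(2) by (auto simp: Q'_def S_def)
    have Q'm: "Q' \<in> lmeasurable"
      unfolding Q'_def by (rule bounded_set_imp_lmeasurable) (use Q(1) in \<open>auto intro!: sets.Int lmeasurable_open borel_open\<close>)
    have "?\<mu> Q' \<le> ?\<mu> (S \<union> (Q - S))"
    proof (rule measure_mono_fmeasurable)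
      show "S \<union> (Q - S) \<in> lmeasurable" using Sm Q(3) by (rule fmeasurable.Un)
    qed (use Q'm in \<open>auto simp: Q'_def\<close>)
    also have "\<dots> \<le> ?\<mu> S + ?\<mu> (Q - S)"
      by (rule measure_Un_le) (use Sm Q(3) in auto)
    finally have mO': "?\<mu> Q' \<le> ?\<mu> S + e" using mOS by linarith
    let ?K = "{(x,d). x \<in> S \<and> 0 < d \<and> ball x d \<subseteq> Q' \<and>
                 ?\<mu> (T \<inter> ball x d) \<le> (1-\<kappa>) * ?\<mu> (ball x d)}"
    obtain C where "countable C" and Csub: "C \<subseteq> ?K"
      and pwC: "pairwise (\<lambda>i j. disjnt (ball (fst i) (snd i)) (ball (fst j) (snd j))) C"
      and negC: "negligible(S - (\<Union>i \<in> C. ball (fst i) (snd i)))"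
    proof (rule Vitali_covering_theorem_balls [of S ?K fst snd])
      fix x and d :: real
      assume x: "x \<in> S" and "d > 0"
      obtain k where "k > 0" and kb: "ball x k \<subseteq> Q'"
        using Q'o SO' x openE by blast
      obtain r where r: "0 < r" "r \<le> min (d/2) k"
        and mr: "?\<mu> (T \<inter> ball x r) \<le> (1-\<kappa>) * ?\<mu> (ball x r)"
        using H[of x "min (d/2) k"] x \<open>d>0\<close> \<open>k>0\<close> by (auto simp: S_def)
      have "ball x r \<subseteq> ball x k" by (rule subset_ball) (use r in auto)
      then have "ball x r \<subseteq> Q'" using kb by (rule order.trans)
      then have "(x,r) \<in> ?K" using r mr x by simp
      moreover have "x \<in> ball (fst (x,r)) (snd (x,r)) \<and> snd (x,r) < d" using r \<open>d > 0\<close> by simp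
      ultimately show "\<exists>i. i \<in> ?K \<and> x \<in> ball (fst i) (snd i) \<and> snd i < d"
        by blast
    qed
    let ?B = "\<lambda>i. T \<inter> ball (fst i) (snd i)"
    have Bm: "?B i \<in> lmeasurable" for i
      by (rule bounded_set_imp_lmeasurable) (auto intro: T)
    have fin: "?\<mu> (\<Union>(?B ` I)) \<le> (1-\<kappa>) * ?\<mu> Q'" if I: "I \<subseteq> C" "finite I" for I
    proof -
      have "?\<mu> (\<Union>(?B ` I)) \<le> (\<Sum>i\<in>I. ?\<mu> (?B i))"
        by (rule measure_UNION_le) (use I Bm in auto)
      also have "\<dots> \<le> (\<Sum>i\<in>I. (1-\<kappa>) * ?\<mu> (ball (fst i) (snd i)))"
        by (rule sum_mono) (use I Csub in force)
      also have "\<dots> = (1-\<kappa>) * ?\<mu> (\<Union>i\<in>I. ball (fst i) (snd i))"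
        by (subst measure_UNION') (use I pwC in \<open>auto simp: sum_distrib_left elim: pairwise_mono\<close>)
      also have "\<dots> \<le> (1-\<kappa>) * ?\<mu> Q'"
      proof (rule mult_left_mono)
        show "?\<mu> (\<Union>i\<in>I. ball (fst i) (snd i)) \<le> ?\<mu> Q'"
        proof (rule measure_mono_fmeasurable)
          show "(\<Union>i\<in>I. ball (fst i) (snd i)) \<subseteq> Q'"
          proof (rule UN_least)
            fix i assume "i \<in> I" then have "i \<in> ?K" using I Csub by blast
            then show "ball (fst i) (snd i) \<subseteq> Q'" by (auto simp: case_prod_unfold)
          qed
        qed (use I Q'm in \<open>auto simp: sets.finite_UN\<close>)
      qed (use k in auto)
      finally show ?thesis .
    qed
    have Um: "\<Union>(?B ` C) \<in> lmeasurable" and Ule: "?\<mu> (\<Union>(?B ` C)) \<le> (1-\<kappa>) * ?\<mu> Q'"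
      using fmeasurable_UN_bound[OF \<open>countable C\<close> Bm fin] measure_UN_bound[OF \<open>countable C\<close> Bm fin]
      by auto
    have Nm: "S - (\<Union>i \<in> C. ball (fst i) (snd i)) \<in> lmeasurable"
      using negC by (simp add: negligible_iff_measure)
    have "?\<mu> S \<le> ?\<mu> ((S - (\<Union>i \<in> C. ball (fst i) (snd i))) \<union> \<Union>(?B ` C))"
    proof (rule measure_mono_fmeasurable)
      show "S \<subseteq> (S - (\<Union>i \<in> C. ball (fst i) (snd i))) \<union> \<Union>(?B ` C)"
        unfolding S_def by blast
      show "(S - (\<Union>i \<in> C. ball (fst i) (snd i))) \<union> \<Union>(?B ` C) \<in> lmeasurable"
        using Nm Um by (rule fmeasurable.Un)
    qed (use Sm in auto)
    also have "\<dots> \<le> ?\<mu> (S - (\<Union>i \<in> C. ball (fst i) (snd i))) + ?\<mu> (\<Union>(?B ` C))"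
      by (rule measure_Un_le) (use Nm Um in auto)
    also have "\<dots> = ?\<mu> (\<Union>(?B ` C))"
      using negC by (simp add: negligible_iff_measure)
    also have "\<dots> \<le> (1-\<kappa>) * ?\<mu> Q'" by (rule Ule)
    also have "\<dots> \<le> (1-\<kappa>) * (?\<mu> S + e)"
      by (rule mult_left_mono) (use mO' k in auto)
    finally have "?\<mu> S \<le> (1-\<kappa>) * (?\<mu> S + e)" .
    then have "\<kappa> * ?\<mu> S \<le> (1-\<kappa>) * e" by (simp add: algebra_simps)
    also have "\<dots> \<le> e" using k e by (simp add: algebra_simps)
    finally show ?thesis .
  qed
  have "\<kappa> * ?\<mu> S \<le> 0"
    by (rule field_le_epsilon) (simp add: main)
  then have "?\<mu> S = 0" using k measure_nonneg[of lebesgue S]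
    by (simp add: mult_le_0_iff)
  then show ?thesis using Sm negligible_iff_measure0 S_def by blast
qed

lemma density_lemma:
  fixes T :: "'a::euclidean_space set"
  assumes T: "T \<in> sets lebesgue" and k: "0 < \<kappa>" "\<kappa> \<le> 1"
   and H: "\<And>x r. x \<in> T \<Longrightarrow> 0 < r \<Longrightarrow> \<exists>d. 0<d \<and> d \<le> r \<and>
       measure lebesgue (T \<inter> ball x d) \<le> (1-\<kappa>) * measure lebesgue (ball x d)"
  shows "negligible T"
proof -
  have "T = \<Union>(range (\<lambda>n::nat. T \<inter> ball 0 (real n)))"
    by (auto simp: real_arch_simple) (metis dist_0_norm mem_ball reals_Archimedean2)
  moreover have "negligible (\<Union>(range (\<lambda>n::nat. T \<inter> ball 0 (real n))))"
    by (rule negligible_countable_Union) (use density_lemma_bounded[OF assms] in auto)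
  ultimately show ?thesis by simp
qed

lemma content_cball_scale:
  fixes c x :: "'a::euclidean_space"
  assumes "k \<ge> 0" "r \<ge> 0"
  shows "measure lebesgue (cball c (k*r)) = k ^ DIM('a) * measure lebesgue (ball x r)"
proof -
  have "measure lebesgue (cball c (k*r)) = Henstock_Kurzweil_Integration.content (ball c (k*r))"
    by (simp add: content_cball_conv_ball)
  also have "\<dots> = (k*r) ^ DIM('a) * Henstock_Kurzweil_Integration.content (ball (0::'a) 1)"
    using assms by (intro content_ball_conv_unit_ball) simp
  also have "\<dots> = k ^ DIM('a) * (r ^ DIM('a) * Henstock_Kurzweil_Integration.content (ball (0::'a) 1))"
    by (simp add: power_mult_distrib)
  also have "\<dots> = k ^ DIM('a) * measure lebesgue (ball x r)"
    using assms content_ball_conv_unit_ball[of r x] by simp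
  finally show ?thesis .
qed

lemma lipschitz_image_measure_le:
  fixes h :: "'a::euclidean_space \<Rightarrow> 'a"
  assumes S: "S \<in> lmeasurable" and s: "s > 0"
   and L: "\<And>x y. x\<in>S \<Longrightarrow> y\<in>S \<Longrightarrow> dist (h x) (h y) \<le> s * dist x y"
   and Ym: "Y \<in> lmeasurable" and Y: "Y \<subseteq> h ` S"
  shows "measure lebesgue Y \<le> (2 * s) ^ DIM('a) * measure lebesgue S"
proof -
  let ?\<mu> = "measure lebesgue"
  let ?c = "(2 * s) ^ DIM('a)"
  have cpos: "?c > 0" using s by simp
  have main: "?\<mu> Y \<le> ?c * ?\<mu> S + ?c * e" if e: "e > 0" for e
  proof -
    obtain Q where Q: "open Q" "S \<subseteq> Q" "Q - S \<in> lmeasurable" "emeasure lebesgue (Q - S) < ennreal e"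
      using sets_lebesgue_outer_open[of S e] S e by blast
    have mOS: "?\<mu> (Q - S) < e"
      using Q(3,4) e by (simp add: emeasure_eq_measure2 ennreal_less_iff)
    have SQ: "S \<union> (Q - S) \<in> lmeasurable" using S Q(3) by (rule fmeasurable.Un)
    have QeS: "S \<union> (Q - S) = Q" using Q(2) by blast
    have Qm: "Q \<in> lmeasurable" using SQ QeS by simp
    have "?\<mu> Q = ?\<mu> (S \<union> (Q - S))" using QeS by simp
    also have "\<dots> \<le> ?\<mu> S + ?\<mu> (Q - S)"
      by (rule measure_Un_le) (use S Q(3) in auto)
    finally have mQ: "?\<mu> Q \<le> ?\<mu> S + e" using mOS by linarith
    let ?K = "{(x,r). 0 < r \<and> ball x r \<subseteq> Q \<and> (\<exists>x'\<in>S. x' \<in> ball x r)}"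
    obtain C where "countable C" and Csub: "C \<subseteq> ?K"
      and pwC: "pairwise (\<lambda>i j. disjnt (ball (fst i) (snd i)) (ball (fst j) (snd j))) C"
      and negC: "negligible(S - (\<Union>i \<in> C. ball (fst i) (snd i)))"
    proof (rule Vitali_covering_theorem_balls [of S ?K fst snd])
      fix x and d :: real
      assume x: "x \<in> S" and "d > 0"
      obtain k where "k > 0" and kb: "ball x k \<subseteq> Q"
        using Q(1,2) x openE by blast
      define r where "r = min (d/2) k"
      have r: "0 < r" "r < d" "r \<le> k" using \<open>k>0\<close> \<open>d>0\<close> by (auto simp: r_def)
      have "ball x r \<subseteq> ball x k" by (rule subset_ball) (use r in auto)
      then have "ball x r \<subseteq> Q" using kb by (rule order.trans)
      then have "(x,r) \<in> ?K" using r x by (auto intro!: bexI[of _ x])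
      moreover have "x \<in> ball (fst (x,r)) (snd (x,r)) \<and> snd (x,r) < d" using r by simp
      ultimately show "\<exists>i. i \<in> ?K \<and> x \<in> ball (fst i) (snd i) \<and> snd i < d"
        by blast
    qed
    have "\<forall>i\<in>C. \<exists>p. p \<in> S \<and> p \<in> ball (fst i) (snd i)"
      using Csub by (auto simp: case_prod_unfold)
    then obtain p where p0: "\<forall>i\<in>C. p i \<in> S \<and> p i \<in> ball (fst i) (snd i)"
      by (rule bchoice[elim_format]) blast
    have p: "\<And>i. i \<in> C \<Longrightarrow> p i \<in> S \<and> p i \<in> ball (fst i) (snd i)" using p0 by blast
    let ?D = "\<lambda>i. cball (h (p i)) (2 * s * snd i)"
    let ?N = "S - (\<Union>i \<in> C. ball (fst i) (snd i))"
    have Dm: "?D i \<in> lmeasurable" for i by simp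
    have negh: "negligible (h ` ?N)"
    proof (rule negligible_locally_Lipschitz_image)
      show "negligible ?N" by (rule negC)
      fix x assume x: "x \<in> ?N"
      show "\<exists>T B. open T \<and> x \<in> T \<and> (\<forall>y\<in>?N \<inter> T. norm (h y - h x) \<le> B * norm (y - x))"
      proof (intro exI[of _ UNIV] exI[of _ s] conjI ballI)
        fix y assume "y \<in> ?N \<inter> UNIV"
        then have "dist (h y) (h x) \<le> s * dist y x" using L x by blast
        then show "norm (h y - h x) \<le> s * norm (y - x)" by (simp add: dist_norm)
      qed auto
    qed simp
    have cover: "Y \<subseteq> h ` ?N \<union> \<Union>(?D ` C)"
    proof
      fix y assume "y \<in> Y"
      then obtain x where x: "x \<in> S" "y = h x" using Y by blast
      show "y \<in> h ` ?N \<union> \<Union>(?D ` C)"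
      proof (cases "x \<in> ?N")
        case True then show ?thesis using x by blast
      next
        case False
        then obtain i where i: "i \<in> C" "x \<in> ball (fst i) (snd i)" using x by blast
        have "dist x (p i) \<le> dist x (fst i) + dist (fst i) (p i)" by (rule dist_triangle)
        also have "\<dots> \<le> 2 * snd i" using i p[OF i(1)] by (simp add: dist_commute)
        finally have dx: "dist x (p i) \<le> 2 * snd i" .
        have "dist (h (p i)) y = dist (h x) (h (p i))" using x by (simp add: dist_commute)
        also have "\<dots> \<le> s * dist x (p i)" using L x(1) p[OF i(1)] by blast
        also have "\<dots> \<le> s * (2 * snd i)" using dx s by (intro mult_left_mono) auto
        finally have "y \<in> ?D i" by (simp add: algebra_simps)
        then show ?thesis using i by blast
      qed
    qed
    have fin: "?\<mu> (\<Union>(?D ` I)) \<le> ?c * ?\<mu> Q" if I: "I \<subseteq> C" "finite I" for I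
    proof -
      have "?\<mu> (\<Union>(?D ` I)) \<le> (\<Sum>i\<in>I. ?\<mu> (?D i))"
        by (rule measure_UNION_le) (use I Dm in auto)
      also have "\<dots> = (\<Sum>i\<in>I. ?c * ?\<mu> (ball (fst i) (snd i)))"
      proof (rule sum.cong)
        fix i assume "i \<in> I"
        then have "snd i > 0" using I Csub by (auto simp: case_prod_unfold)
        then show "?\<mu> (?D i) = ?c * ?\<mu> (ball (fst i) (snd i))"
          using content_cball_scale[of "2 * s" "snd i" "h (p i)" "fst i"] s by simp
      qed simp
      also have "\<dots> = ?c * ?\<mu> (\<Union>i\<in>I. ball (fst i) (snd i))"
        by (subst measure_UNION') (use I pwC in \<open>auto simp: sum_distrib_left elim: pairwise_mono\<close>)
      also have "\<dots> \<le> ?c * ?\<mu> Q"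
      proof (rule mult_left_mono)
        show "?\<mu> (\<Union>i\<in>I. ball (fst i) (snd i)) \<le> ?\<mu> Q"
        proof (rule measure_mono_fmeasurable)
          show "(\<Union>i\<in>I. ball (fst i) (snd i)) \<subseteq> Q"
          proof (rule UN_least)
            fix i assume "i \<in> I" then have "i \<in> ?K" using I Csub by blast
            then show "ball (fst i) (snd i) \<subseteq> Q" by (auto simp: case_prod_unfold)
          qed
        qed (use I Qm in \<open>auto simp: sets.finite_UN\<close>)
      qed (use cpos in auto)
      finally show ?thesis .
    qed
    have Um: "\<Union>(?D ` C) \<in> lmeasurable" and Ule: "?\<mu> (\<Union>(?D ` C)) \<le> ?c * ?\<mu> Q"
      using fmeasurable_UN_bound[OF \<open>countable C\<close> Dm fin] measure_UN_bound[OF \<open>countable C\<close> Dm fin]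
      by auto
    have Nm: "h ` ?N \<in> lmeasurable" and N0: "?\<mu> (h ` ?N) = 0"
      using negh by (simp_all add: negligible_iff_measure)
    have "?\<mu> Y \<le> ?\<mu> (h ` ?N \<union> \<Union>(?D ` C))"
    proof (rule measure_mono_fmeasurable)
      show "h ` ?N \<union> \<Union>(?D ` C) \<in> lmeasurable" using Nm Um by (rule fmeasurable.Un)
    qed (use Ym cover in auto)
    also have "\<dots> \<le> ?\<mu> (h ` ?N) + ?\<mu> (\<Union>(?D ` C))"
      by (rule measure_Un_le) (use Nm Um in auto)
    also have "\<dots> \<le> ?c * ?\<mu> Q" using N0 Ule by simp
    also have "\<dots> \<le> ?c * (?\<mu> S + e)"
      by (rule mult_left_mono) (use mQ cpos in auto)
    finally show ?thesis by (simp add: algebra_simps)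
  qed
  show ?thesis
  proof (rule field_le_epsilon)
    fix e :: real assume "e > 0"
    then have "?\<mu> Y \<le> ?c * ?\<mu> S + ?c * (e / ?c)" using main[of "e/?c"] cpos by simp
    then show "?\<mu> Y \<le> ?c * ?\<mu> S + e" using cpos s by simp
  qed
qed

lemma borel_imp_lebesgue: "A \<in> sets borel \<Longrightarrow> A \<in> sets lebesgue"
  by (metis sets_completionI_sets sets_lborel)

lemma phi_word_Nil[simp]: "phi_word \<phi> [] = id"
  by (simp add: phi_word_def)

lemma phi_word_Cons[simp]: "phi_word \<phi> (i # a) x = \<phi> i (phi_word \<phi> a x)"
  by (simp add: phi_word_def)

lemma phi_word_append: "phi_word \<phi> (a @ b) x = phi_word \<phi> a (phi_word \<phi> b x)"
  by (induction a) auto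

lemma words_Cons[simp]: "i # a \<in> words l \<longleftrightarrow> i \<in> {1..l} \<and> a \<in> words l"
  by (auto simp: words_def)

lemma countable_words: "countable (words l)"
  by (rule countable_subset[OF subset_UNIV]) simp

lemma finite_words_ge:
  fixes \<Psi> :: "nat list \<Rightarrow> real"
  assumes maxlim: "(\<lambda>n. Max (\<Psi> ` words_n l n)) \<longlonglongrightarrow> 0" and d: "\<delta> > 0"
  shows "finite {a \<in> words l. \<Psi> a \<ge> \<delta>}"
proof -
  obtain N where N: "\<And>n. n \<ge> N \<Longrightarrow> Max (\<Psi> ` words_n l n) < \<delta>"
    using order_tendstoD(2)[OF maxlim, of \<delta>] d unfolding eventually_sequentially by blast
  have "{a \<in> words l. \<Psi> a \<ge> \<delta>} \<subseteq> {xs. set xs \<subseteq> {1..l} \<and> length xs \<le> N}"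
  proof
    fix a assume "a \<in> {a \<in> words l. \<Psi> a \<ge> \<delta>}"
    then have a: "a \<in> words l" "\<Psi> a \<ge> \<delta>" by auto
    have "length a \<le> N"
    proof (rule ccontr)
      assume "\<not> length a \<le> N"
      then have "Max (\<Psi> ` words_n l (length a)) < \<delta>" using N by simp
      moreover have "finite (words_n l (length a))"
        unfolding words_n_def using finite_lists_length_eq[of "{1..l}" "length a"] by simp
      moreover have "a \<in> words_n l (length a)" using a by (simp add: words_def words_n_def)
      ultimately have "\<Psi> a < \<delta>" by (meson Max_ge finite_imageI image_eqI le_less_trans)
      then show False using a by simp
    qed
    then show "a \<in> {xs. set xs \<subseteq> {1..l} \<and> length xs \<le> N}" using a by (simp add: words_def)
  qed
  then show ?thesis by (rule finite_subset) (simp add: finite_lists_length_le)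
qed

lemma W_set_alt:
  "W_set l \<phi> z \<rho> = (\<Inter>F\<in>{F. finite F \<and> F \<subseteq> words l}. \<Union>a\<in>words l - F. cball (phi_word \<phi> a z) (\<rho> a))"
  (is "?L = ?R")
proof
  show "?L \<subseteq> ?R"
  proof
    fix x assume "x \<in> ?L"
    then have inf: "infinite {a \<in> words l. dist x (phi_word \<phi> a z) \<le> \<rho> a}" by (simp add: W_set_def)
    show "x \<in> ?R"
    proof (rule INT_I)
      fix F assume "F \<in> {F. finite F \<and> F \<subseteq> words l}"
      then have "finite F" by simp
      then obtain a where "a \<in> {a \<in> words l. dist x (phi_word \<phi> a z) \<le> \<rho> a}" "a \<notin> F"
      proof -
        have "\<not> {a \<in> words l. dist x (phi_word \<phi> a z) \<le> \<rho> a} \<subseteq> F"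
          using inf \<open>finite F\<close> finite_subset by blast
        then show ?thesis using that by blast
      qed
      then show "x \<in> (\<Union>a\<in>words l - F. cball (phi_word \<phi> a z) (\<rho> a))"
        by (auto simp: dist_commute)
    qed
  qed
  show "?R \<subseteq> ?L"
  proof
    fix x assume x: "x \<in> ?R"
    show "x \<in> ?L"
    proof (rule ccontr)
      assume "x \<notin> ?L"
      then have fin: "finite {a \<in> words l. dist x (phi_word \<phi> a z) \<le> \<rho> a}" by (simp add: W_set_def)
      have "x \<in> (\<Union>a\<in>words l - {a \<in> words l. dist x (phi_word \<phi> a z) \<le> \<rho> a}. cball (phi_word \<phi> a z) (\<rho> a))"
        using x fin by blast
      then show False by (auto simp: dist_commute)
    qed
  qed
qed

lemma W_set_borel: "W_set l \<phi> z \<rho> \<in> sets borel"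
proof -
  have cF: "countable {F. finite F \<and> F \<subseteq> words l}"
    by (rule countable_Collect_finite_subset[OF countable_words])
  have "(\<Inter>F\<in>{F. finite F \<and> F \<subseteq> words l}. \<Union>a\<in>words l - F. cball (phi_word \<phi> a z) (\<rho> a)) \<in> sets borel"
  proof (rule sets.countable_INT')
    show "{F. finite F \<and> F \<subseteq> words l} \<noteq> {}" by blast
    show "(\<lambda>F. \<Union>a\<in>words l - F. cball (phi_word \<phi> a z) (\<rho> a)) ` {F. finite F \<and> F \<subseteq> words l} \<subseteq> sets borel"
    proof safe
      fix F
      show "(\<Union>a\<in>words l - F. cball (phi_word \<phi> a z) (\<rho> a)) \<in> sets borel"
        by (rule sets.countable_UN'') (auto intro: countable_subset[OF _ countable_words] borel_closed)
    qed
  qed (rule cF)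
  then show ?thesis by (simp add: W_set_alt)
qed

lemma W_set_step:
  assumes i: "i \<in> {1..l}" and lip: "\<And>x y. dist (\<phi> i x) (\<phi> i y) \<le> dist x y"
    and x: "x \<in> W_set l \<phi> z \<rho>" and r: "\<And>a. a \<in> words l \<Longrightarrow> \<rho> a \<le> \<rho>' (i # a)"
  shows "\<phi> i x \<in> W_set l \<phi> z \<rho>'"
proof -
  let ?S = "{a \<in> words l. dist x (phi_word \<phi> a z) \<le> \<rho> a}"
  have inf: "infinite ?S" using x by (simp add: W_set_def)
  have "(Cons i) ` ?S \<subseteq> {b \<in> words l. dist (\<phi> i x) (phi_word \<phi> b z) \<le> \<rho>' b}"
  proof safe
    fix a assume a: "a \<in> words l" "dist x (phi_word \<phi> a z) \<le> \<rho> a"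
    show "i # a \<in> words l" using a i by simp
    have "dist (\<phi> i x) (phi_word \<phi> (i # a) z) \<le> dist x (phi_word \<phi> a z)" using lip by simp
    also have "\<dots> \<le> \<rho>' (i # a)" using a r[OF a(1)] by linarith
    finally show "dist (\<phi> i x) (phi_word \<phi> (i # a) z) \<le> \<rho>' (i # a)" .
  qed
  moreover have "infinite ((Cons i) ` ?S)"
    using inf by (simp add: finite_image_iff inj_on_def)
  ultimately show ?thesis unfolding W_set_def by (auto dest: finite_subset)
qed

lemma W_set_mono:
  assumes "\<And>a. a \<in> words l \<Longrightarrow> \<rho> a \<le> \<rho>' a"
  shows "W_set l \<phi> z \<rho> \<subseteq> W_set l \<phi> z \<rho>'"
  unfolding W_set_def using assms
  by (auto elim!: infinite_super[rotated] intro: order.trans)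

lemma blowup:
  fixes \<phi> :: "nat \<Rightarrow> 'a::euclidean_space \<Rightarrow> 'a" and \<rho> :: "nat list \<Rightarrow> real"
  assumes C: "C \<ge> 1" and nn: "\<And>a. a \<in> words l \<Longrightarrow> \<rho> a \<ge> 0"
   and fin: "\<And>\<delta>. \<delta> > 0 \<Longrightarrow> finite {a\<in>words l. \<rho> a \<ge> \<delta>}"
  shows "negligible (W_set l \<phi> z (\<lambda>a. C * \<rho> a) - W_set l \<phi> z \<rho>)"
proof -
  let ?c = "\<lambda>a. phi_word \<phi> a z"
  let ?Fin = "{F. finite F \<and> F \<subseteq> words l}"
  let ?WC = "W_set l \<phi> z (\<lambda>a. C * \<rho> a)"
  define U where "U F = (\<Union>a\<in>words l - F. cball (?c a) (\<rho> a))" for F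
  have sub: "?WC - W_set l \<phi> z \<rho> \<subseteq> \<Union>((\<lambda>F. ?WC - U F) ` ?Fin)"
  proof
    fix x assume x: "x \<in> ?WC - W_set l \<phi> z \<rho>"
    let ?F = "{a\<in>words l. dist x (?c a) \<le> \<rho> a}"
    have "finite ?F" using x by (simp add: W_set_def)
    then have "?F \<in> ?Fin" by auto
    moreover have "x \<notin> U ?F" by (auto simp: U_def dist_commute)
    ultimately show "x \<in> \<Union>((\<lambda>F. ?WC - U F) ` ?Fin)" using x by blast
  qed
  define \<kappa> where "\<kappa> = (1/(3*C)) ^ DIM('a)"
  have k3: "0 < 1/(3*C)" "1/(3*C) \<le> 1" using C by auto
  have kpos: "\<kappa> > 0" using k3 by (simp add: \<kappa>_def)
  have kle: "\<kappa> \<le> 1" unfolding \<kappa>_def using k3 by (intro power_le_one) auto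
  have each: "negligible (?WC - U F)" if F: "F \<in> ?Fin" for F
  proof (rule density_lemma[OF _ kpos kle])
    have Ub: "U F \<in> sets borel" unfolding U_def
      by (rule sets.countable_UN'') (auto intro: countable_subset[OF _ countable_words] borel_closed)
    show "?WC - U F \<in> sets lebesgue"
      by (rule borel_imp_lebesgue) (intro sets.Diff W_set_borel Ub)
    fix x r assume x: "x \<in> ?WC - U F" and r: "(0::real) < r"
    define \<delta> where "\<delta> = r / (3*C)"
    have dpos: "\<delta> > 0" using r C by (simp add: \<delta>_def)
    let ?S = "{a \<in> words l. dist x (?c a) \<le> C * \<rho> a}"
    have infS: "infinite ?S" using x by (simp add: W_set_def)
    have finG: "finite (F \<union> {a\<in>words l. \<rho> a \<ge> \<delta>})" using F fin[OF dpos] by auto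
    have "\<not> ?S \<subseteq> F \<union> {a\<in>words l. \<rho> a \<ge> \<delta>}"
      using infS finG finite_subset by blast
    then obtain a where a0: "a \<in> ?S" "a \<notin> F \<union> {a\<in>words l. \<rho> a \<ge> \<delta>}"
      by blast
    have a: "a \<in> words l" "dist x (?c a) \<le> C * \<rho> a" "a \<notin> F" "\<rho> a < \<delta>"
      using a0 by auto
    have cU: "cball (?c a) (\<rho> a) \<subseteq> U F" using a by (auto simp: U_def)
    have rpos: "\<rho> a > 0"
    proof (rule ccontr)
      assume "\<not> \<rho> a > 0"
      then have "\<rho> a = 0" using nn[OF a(1)] by simp
      then have "x = ?c a" using a(2) by simp
      then have "x \<in> cball (?c a) (\<rho> a)" using nn[OF a(1)] by simp
      then show False using cU x by blast
    qed
    define d where "d = 3 * C * \<rho> a"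
    have dp: "0 < d" using rpos C by (simp add: d_def)
    have dr: "d \<le> r"
    proof -
      have "d = 3 * C * \<rho> a" by (simp add: d_def)
      also have "\<dots> \<le> 3 * C * \<delta>" using a(4) C by (intro mult_left_mono) auto
      also have "\<dots> = r" using C by (simp add: \<delta>_def)
      finally show ?thesis .
    qed
    have cb: "cball (?c a) (\<rho> a) \<subseteq> ball x d"
    proof
      fix y assume "y \<in> cball (?c a) (\<rho> a)"
      then have "dist (?c a) y \<le> \<rho> a" by simp
      then have "dist x y \<le> C * \<rho> a + \<rho> a" using a(2) dist_triangle[of x y "?c a"] by linarith
      also have "\<dots> < d" using C rpos by (simp add: d_def algebra_simps)
      finally show "y \<in> ball x d" by simp
    qed
    have mc: "measure lebesgue (cball (?c a) (\<rho> a)) = \<kappa> * measure lebesgue (ball x d)"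
    proof -
      have "\<rho> a = (1/(3*C)) * d" using C by (simp add: d_def)
      then have "measure lebesgue (cball (?c a) (\<rho> a)) = measure lebesgue (cball (?c a) ((1/(3*C)) * d))"
        by simp
      also have "\<dots> = \<kappa> * measure lebesgue (ball x d)"
        unfolding \<kappa>_def by (rule content_cball_scale) (use k3 dp in auto)
      finally show ?thesis .
    qed
    have "measure lebesgue ((?WC - U F) \<inter> ball x d) \<le> measure lebesgue (ball x d - cball (?c a) (\<rho> a))"
    proof (rule measure_mono_fmeasurable)
      show "(?WC - U F) \<inter> ball x d \<subseteq> ball x d - cball (?c a) (\<rho> a)" using cU by blast
      show "(?WC - U F) \<inter> ball x d \<in> sets lebesgue"
        using \<open>?WC - U F \<in> sets lebesgue\<close> by auto
    qed (auto intro!: fmeasurable_Diff)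
    also have "\<dots> = measure lebesgue (ball x d) - measure lebesgue (cball (?c a) (\<rho> a))"
      by (rule measurable_measure_Diff) (use cb in auto)
    also have "\<dots> = (1 - \<kappa>) * measure lebesgue (ball x d)"
      using mc by (simp add: algebra_simps)
    finally show "\<exists>d>0. d \<le> r \<and> measure lebesgue ((?WC - U F) \<inter> ball x d) \<le> (1 - \<kappa>) * measure lebesgue (ball x d)"
      using dp dr by blast
  qed
  have "negligible (\<Union>((\<lambda>F. ?WC - U F) ` ?Fin))"
    by (rule negligible_countable_Union)
       (use each countable_Collect_finite_subset[OF countable_words] in auto)
  then show ?thesis using sub negligible_subset by blast
qed

lemma contraction_lip:
  assumes "is_contraction f" shows "dist (f x) (f y) \<le> dist x y"
proof -
  obtain r where r: "0 \<le> r" "r < 1" "\<forall>x y. dist (f x) (f y) \<le> r * dist x y"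
    using assms by (auto simp: is_contraction_def)
  have "dist (f x) (f y) \<le> r * dist x y" using r by blast
  also have "\<dots> \<le> dist x y" using r by (simp add: mult_left_le_one_le)
  finally show ?thesis .
qed

lemma attractor_image:
  assumes "is_attractor l \<phi> X" "i \<in> {1..l}" "x \<in> X" shows "\<phi> i x \<in> X"
  using assms unfolding is_attractor_def by blast

lemma attractor_word:
  assumes "is_attractor l \<phi> X" "a \<in> words l" "x \<in> X" shows "phi_word \<phi> a x \<in> X"
  using assms(2)
proof (induction a)
  case Nil then show ?case using assms(3) by simp
next
  case (Cons i a) then show ?case using attractor_image[OF assms(1)] by simp
qed

lemma W_subset_X:
  fixes \<Psi> :: "nat list \<Rightarrow> real"
  assumes attr: "is_attractor l \<phi> X" and z: "z \<in> X"
    and maxlim: "(\<lambda>n. Max (\<Psi> ` words_n l n)) \<longlonglongrightarrow> 0"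
  shows "W_set l \<phi> z \<Psi> \<subseteq> X"
proof
  fix x assume x: "x \<in> W_set l \<phi> z \<Psi>"
  have "closed X" using attr by (auto simp: is_attractor_def compact_imp_closed)
  moreover have "\<exists>y\<in>X. dist y x < e" if e: "e > 0" for e
  proof -
    let ?S = "{a \<in> words l. dist x (phi_word \<phi> a z) \<le> \<Psi> a}"
    have "infinite ?S" using x by (simp add: W_set_def)
    moreover have "finite {a\<in>words l. \<Psi> a \<ge> e}" by (rule finite_words_ge[OF maxlim e])
    ultimately have "\<not> ?S \<subseteq> {a\<in>words l. \<Psi> a \<ge> e}" using finite_subset by blast
    then obtain a where a: "a \<in> ?S" "a \<notin> {a\<in>words l. \<Psi> a \<ge> e}" by blast
    then have "dist (phi_word \<phi> a z) x < e" by (auto simp: dist_commute)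
    moreover have "phi_word \<phi> a z \<in> X" using a attractor_word[OF attr _ z] by auto
    ultimately show ?thesis by blast
  qed
  ultimately show "x \<in> X" using closed_approachable by blast
qed

definition Vset :: "nat \<Rightarrow> (nat \<Rightarrow> 'a::euclidean_space \<Rightarrow> 'a) \<Rightarrow> 'a \<Rightarrow> (nat list \<Rightarrow> real) \<Rightarrow> 'a set" where
  "Vset l \<phi> z \<Psi> = (\<Union>k::nat. W_set l \<phi> z (\<lambda>a. real (Suc k) * \<Psi> a))"

lemma Vset_borel: "Vset l \<phi> z \<Psi> \<in> sets borel"
  unfolding Vset_def using W_set_borel by (intro sets.countable_UN) blast

lemma W_subset_V: "W_set l \<phi> z \<Psi> \<subseteq> Vset l \<phi> z \<Psi>"
proof
  fix x assume "x \<in> W_set l \<phi> z \<Psi>"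
  then show "x \<in> Vset l \<phi> z \<Psi>" unfolding Vset_def by (intro UN_I[of 0]) simp_all
qed

lemma V_minus_W:
  fixes \<Psi> :: "nat list \<Rightarrow> real" and \<phi> :: "nat \<Rightarrow> 'a::euclidean_space \<Rightarrow> 'a"
  assumes nonneg: "\<forall>a\<in>words l. \<Psi> a \<ge> 0"
    and maxlim: "(\<lambda>n. Max (\<Psi> ` words_n l n)) \<longlonglongrightarrow> 0"
  shows "negligible (Vset l \<phi> z \<Psi> - W_set l \<phi> z \<Psi>)"
proof -
  have "Vset l \<phi> z \<Psi> - W_set l \<phi> z \<Psi> = (\<Union>k::nat. W_set l \<phi> z (\<lambda>a. real (Suc k) * \<Psi> a) - W_set l \<phi> z \<Psi>)"
    unfolding Vset_def by blast
  moreover have "negligible (\<Union>k::nat. W_set l \<phi> z (\<lambda>a. real (Suc k) * \<Psi> a) - W_set l \<phi> z \<Psi>)"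
  proof (rule negligible_countable_Union)
    show "countable (range (\<lambda>k::nat. W_set l \<phi> z (\<lambda>a. real (Suc k) * \<Psi> a) - W_set l \<phi> z \<Psi>))"
      by simp
    fix S assume "S \<in> range (\<lambda>k::nat. W_set l \<phi> z (\<lambda>a. real (Suc k) * \<Psi> a) - W_set l \<phi> z \<Psi>)"
    then obtain k where S: "S = W_set l \<phi> z (\<lambda>a. real (Suc k) * \<Psi> a) - W_set l \<phi> z \<Psi>" by blast
    show "negligible S" unfolding S
      by (rule blowup) (use nonneg finite_words_ge[OF maxlim] in auto)
  qed
  ultimately show ?thesis by simp
qed

lemma V_step:
  fixes \<Psi> :: "nat list \<Rightarrow> real" and \<phi> :: "nat \<Rightarrow> 'a::euclidean_space \<Rightarrow> 'a"
  assumes nonneg: "\<forall>a\<in>words l. \<Psi> a \<ge> 0"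
    and wd: "weakly_decaying l \<Psi>"
    and i: "i \<in> {1..l}" and lip: "\<And>x y. dist (\<phi> i x) (\<phi> i y) \<le> dist x y"
    and x: "x \<in> Vset l \<phi> z \<Psi>"
  shows "\<phi> i x \<in> Vset l \<phi> z \<Psi>"
proof -
  obtain c where c: "c > 0" "\<forall>a\<in>words l. \<forall>i\<in>{1..l}. \<Psi> (i # a) \<ge> c * \<Psi> a"
    using wd by (auto simp: weakly_decaying_def)
  obtain k where k: "x \<in> W_set l \<phi> z (\<lambda>a. real (Suc k) * \<Psi> a)"
    using x by (auto simp: Vset_def)
  define C where "C = real (Suc k)"
  have "\<phi> i x \<in> W_set l \<phi> z (\<lambda>a. (C / c) * \<Psi> a)"
  proof (rule W_set_step[where i=i and l=l and \<phi>=\<phi> and x=x and z=z and \<rho>="\<lambda>a. C * \<Psi> a"])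
    show "i \<in> {1..l}" by (rule i)
    show "\<And>x y. dist (\<phi> i x) (\<phi> i y) \<le> dist x y" by (rule lip)
    show "x \<in> W_set l \<phi> z (\<lambda>a. C * \<Psi> a)" using k by (simp add: C_def)
    fix a assume a: "a \<in> words l"
    have "C * \<Psi> a = (C / c) * (c * \<Psi> a)" using c by simp
    also have "\<dots> \<le> (C / c) * \<Psi> (i # a)"
      using c a i by (intro mult_left_mono) (auto simp: C_def)
    finally show "C * \<Psi> a \<le> C / c * \<Psi> (i # a)" .
  qed
  moreover obtain n :: nat where "C / c \<le> real n" using real_arch_simple by blast
  then have k': "C / c \<le> real (Suc n)" by simp
  have "W_set l \<phi> z (\<lambda>a. (C / c) * \<Psi> a) \<subseteq> W_set l \<phi> z (\<lambda>a. real (Suc n) * \<Psi> a)"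
  proof (rule W_set_mono)
    fix a assume "a \<in> words l"
    then have "\<Psi> a \<ge> 0" using nonneg by blast
    then show "C / c * \<Psi> a \<le> real (Suc n) * \<Psi> a" using k' by (rule mult_right_mono[rotated])
  qed
  ultimately have "\<phi> i x \<in> W_set l \<phi> z (\<lambda>a. real (Suc n) * \<Psi> a)" by blast
  then show ?thesis unfolding Vset_def by blast
qed

lemma V_word:
  fixes \<Psi> :: "nat list \<Rightarrow> real" and \<phi> :: "nat \<Rightarrow> 'a::euclidean_space \<Rightarrow> 'a"
  assumes ifs: "IFS l \<phi>" and nonneg: "\<forall>a\<in>words l. \<Psi> a \<ge> 0"
    and wd: "weakly_decaying l \<Psi>" and a: "a \<in> words l" and x: "x \<in> Vset l \<phi> z \<Psi>"
  shows "phi_word \<phi> a x \<in> Vset l \<phi> z \<Psi>"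
  using a
proof (induction a)
  case Nil then show ?case using x by simp
next
  case (Cons i a)
  then have i: "i \<in> {1..l}" and a: "a \<in> words l" by auto
  have lip: "\<And>x y. dist (\<phi> i x) (\<phi> i y) \<le> dist x y"
    using ifs i by (auto simp: IFS_def intro: contraction_lip)
  show ?case using V_step[where \<phi>=\<phi> and i=i, OF nonneg wd i lip] Cons.IH[OF a] by simp
qed

lemma word_similarity:
  fixes \<phi> :: "nat \<Rightarrow> 'a::euclidean_space \<Rightarrow> 'a"
  assumes rr: "\<And>i. i \<in> {1..l} \<Longrightarrow> 0 < rr i \<and> rr i \<le> rmax \<and> (\<forall>x y. dist (\<phi> i x) (\<phi> i y) = rr i * dist x y)"
    and a: "a \<in> words l"
  shows "\<exists>\<rho>. 0 < \<rho> \<and> \<rho> \<le> rmax ^ length a \<and> (\<forall>x y. dist (phi_word \<phi> a x) (phi_word \<phi> a y) = \<rho> * dist x y)"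
  using a
proof (induction a)
  case Nil then show ?case by (intro exI[of _ 1]) simp
next
  case (Cons i a)
  then have i: "i \<in> {1..l}" and a: "a \<in> words l" by auto
  obtain \<rho> where \<rho>: "0 < \<rho>" "\<rho> \<le> rmax ^ length a" "\<forall>x y. dist (phi_word \<phi> a x) (phi_word \<phi> a y) = \<rho> * dist x y"
    using Cons.IH[OF a] by blast
  have ri: "0 < rr i" "rr i \<le> rmax" "\<forall>x y. dist (\<phi> i x) (\<phi> i y) = rr i * dist x y" using rr[OF i] by auto
  show ?case
  proof (intro exI[of _ "rr i * \<rho>"] conjI allI)
    show "0 < rr i * \<rho>" using ri \<rho> by simp
    show "rr i * \<rho> \<le> rmax ^ length (i # a)"
      using ri \<rho> by (simp add: mult_mono)
    fix x y
    show "dist (phi_word \<phi> (i # a) x) (phi_word \<phi> (i # a) y) = rr i * \<rho> * dist x y"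
      using ri \<rho> by simp
  qed
qed

lemma attractor_cover:
  assumes attr: "is_attractor l \<phi> X"
  shows "x \<in> X \<Longrightarrow> \<exists>a. a \<in> words l \<and> length a = n \<and> x \<in> phi_word \<phi> a ` X"
proof (induction n arbitrary: x)
  case 0 then show ?case by (intro exI[of _ "[]"]) (auto simp: words_def)
next
  case (Suc n)
  obtain i y where iy: "i \<in> {1..l}" "y \<in> X" "x = \<phi> i y"
    using Suc.prems attr unfolding is_attractor_def by blast
  obtain a where a: "a \<in> words l" "length a = n" "y \<in> phi_word \<phi> a ` X"
    using Suc.IH[OF iy(2)] by blast
  then obtain w where w: "w \<in> X" "y = phi_word \<phi> a w" by blast
  show ?case using iy a w by (intro exI[of _ "i # a"]) auto
qed

lemma part1_core:
  fixes l :: nat and \<phi> :: "nat \<Rightarrow> 'a::euclidean_space \<Rightarrow> 'a" and X :: "'a set"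
    and z :: 'a and \<Psi> :: "nat list \<Rightarrow> real"
  assumes ifs: "IFS l \<phi>"
    and attr: "is_attractor l \<phi> X"
    and z: "z \<in> X"
    and nonneg: "\<forall>a\<in>words l. \<Psi> a \<ge> 0"
    and wd: "weakly_decaying l \<Psi>"
    and maxlim: "(\<lambda>n. Max (\<Psi> ` words_n l n)) \<longlonglongrightarrow> 0"
    and sim: "\<forall>i\<in>{1..l}. is_similarity (\<phi> i)"
    and pos: "emeasure lebesgue (W_set l \<phi> z \<Psi>) > 0"
  shows "negligible (X - Vset l \<phi> z \<Psi>)"
proof -
  let ?V = "Vset l \<phi> z \<Psi>"
  let ?\<mu> = "measure lebesgue"
  let ?d = "DIM('a)"
  have l1: "l \<ge> 1" using ifs by (simp add: IFS_def)
  have "\<forall>i\<in>{1..l}. \<exists>r. 0 < r \<and> r < 1 \<and> (\<forall>x y. dist (\<phi> i x) (\<phi> i y) = r * dist x y)"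
    using sim by (simp add: is_similarity_def)
  then obtain rr where rr: "\<And>i. i \<in> {1..l} \<Longrightarrow> 0 < rr i \<and> rr i < 1 \<and> (\<forall>x y. dist (\<phi> i x) (\<phi> i y) = rr i * dist x y)"
    by (metis (no_types, lifting) bchoice)
  define rmax where "rmax = Max (rr ` {1..l})"
  have ne: "rr ` {1..l} \<noteq> {}" using l1 by auto
  have rmax1: "rmax < 1" unfolding rmax_def using rr ne by (subst Max_less_iff) auto
  have rmax0: "rmax > 0" unfolding rmax_def using rr l1
    by (metis Max_ge atLeastAtMost_iff finite_atLeastAtMost finite_imageI image_eqI le_refl less_le_trans)
  have rrle: "\<And>i. i \<in> {1..l} \<Longrightarrow> 0 < rr i \<and> rr i \<le> rmax \<and> (\<forall>x y. dist (\<phi> i x) (\<phi> i y) = rr i * dist x y)"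
    using rr unfolding rmax_def by auto
  have Xc: "compact X" "X \<noteq> {}" using attr by (auto simp: is_attractor_def)
  obtain B where B: "\<forall>x\<in>X. norm x \<le> B" using compact_imp_bounded[OF Xc(1)] bounded_iff by blast
  define D where "D = 2 * B + 1"
  have Dist: "\<And>x y. x \<in> X \<Longrightarrow> y \<in> X \<Longrightarrow> dist x y < D"
  proof -
    fix x y assume "x \<in> X" "y \<in> X"
    then have "norm x \<le> B" "norm y \<le> B" using B by auto
    then show "dist x y < D" unfolding D_def dist_norm using norm_triangle_ineq4[of x y] by linarith
  qed
  have Dpos: "D > 0" using Dist Xc(2) by (metis all_not_in_conv dist_self)
  have Vm: "?V \<inter> X \<in> lmeasurable"
    by (rule bounded_set_imp_lmeasurable)
       (use compact_imp_bounded[OF Xc(1)] Vset_borel[of l \<phi> z \<Psi>] compact_imp_closed[OF Xc(1)]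
        in \<open>auto intro!: borel_imp_lebesgue sets.Int borel_closed\<close>)
  have WVX: "W_set l \<phi> z \<Psi> \<subseteq> ?V \<inter> X"
    using W_subset_V W_subset_X[OF attr z maxlim] by blast
  have "emeasure lebesgue (W_set l \<phi> z \<Psi>) \<le> emeasure lebesgue (?V \<inter> X)"
    by (rule emeasure_mono[OF WVX]) (use Vm in auto)
  then have "emeasure lebesgue (?V \<inter> X) > 0" using pos by simp
  then have k0: "?\<mu> (?V \<inter> X) > 0" using Vm
    by (simp add: emeasure_eq_measure2 zero_less_measure_iff)
  define c1 where "c1 = ?\<mu> (ball (0::'a) 1)"
  have c1: "c1 > 0" unfolding c1_def by (simp add: content_ball_pos)
  define \<kappa> where "\<kappa> = min 1 (?\<mu> (?V \<inter> X) / ((2 * D) ^ ?d * c1))"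
  have kpos: "\<kappa> > 0" unfolding \<kappa>_def using k0 c1 Dpos by simp
  have kle: "\<kappa> \<le> 1" unfolding \<kappa>_def by simp
  show ?thesis
  proof (rule density_lemma[OF _ kpos kle])
    show "X - ?V \<in> sets lebesgue"
      by (rule borel_imp_lebesgue) (use compact_imp_closed[OF Xc(1)] Vset_borel[of l \<phi> z \<Psi>] in \<open>auto intro!: sets.Diff borel_closed\<close>)
    fix x r assume x: "x \<in> X - ?V" and r: "(0::real) < r"
    obtain n where n: "rmax ^ n < r / D" using real_arch_pow_inv[of "r/D" rmax] r Dpos rmax1 by auto
    obtain a where a: "a \<in> words l" "length a = n" "x \<in> phi_word \<phi> a ` X"
      using attractor_cover[OF attr, of x n] x by blast
    obtain x0 where x0: "x0 \<in> X" "x = phi_word \<phi> a x0" using a(3) by blast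
    obtain \<rho> where \<rho>: "0 < \<rho>" "\<rho> \<le> rmax ^ length a" "\<forall>x y. dist (phi_word \<phi> a x) (phi_word \<phi> a y) = \<rho> * dist x y"
      using word_similarity[where \<phi>=\<phi> and rr=rr and l=l, OF rrle a(1)] by blast
    define d where "d = \<rho> * D"
    have dpos: "d > 0" using \<rho> Dpos by (simp add: d_def)
    have dr: "d \<le> r"
    proof -
      have "d \<le> rmax ^ n * D" using \<rho> a(2) Dpos by (simp add: d_def)
      also have "\<dots> \<le> r" using n Dpos by (simp add: field_simps)
      finally show ?thesis .
    qed
    let ?f = "phi_word \<phi> a"
    have finj: "inj_on ?f X"
      by (rule inj_onI) (use \<rho> in \<open>metis dist_eq_0_iff mult_eq_0_iff order_less_irrefl\<close>)
    have fX: "?f ` X \<subseteq> ball x d"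
    proof
      fix u assume "u \<in> ?f ` X"
      then obtain y where y: "y \<in> X" "u = ?f y" by blast
      have "dist x u = \<rho> * dist x0 y" using \<rho>(3) x0 y by simp
      also have "\<dots> < \<rho> * D" using Dist[OF x0(1) y(1)] \<rho>(1) by simp
      finally show "u \<in> ball x d" by (simp add: d_def)
    qed
    have fcont: "continuous_on X ?f"
    proof (rule lipschitz_on_continuous_on)
      show "\<rho>-lipschitz_on X ?f" using \<rho> by (auto simp: lipschitz_on_def)
    qed
    have fXc: "compact (?f ` X)" by (rule compact_continuous_image[OF fcont Xc(1)])
    let ?S = "?V \<inter> ?f ` X"
    have Sm: "?S \<in> lmeasurable"
      by (rule bounded_set_imp_lmeasurable)
         (use compact_imp_bounded[OF fXc] Vset_borel[of l \<phi> z \<Psi>] compact_imp_closed[OF fXc]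
          in \<open>auto intro!: borel_imp_lebesgue sets.Int borel_closed\<close>)
    let ?h = "inv_into X ?f"
    have hlip: "dist (?h u) (?h v) \<le> (1/\<rho>) * dist u v" if uvS: "u \<in> ?S" "v \<in> ?S" for u v
    proof -
      obtain u0 v0 where uv: "u0 \<in> X" "v0 \<in> X" "u = ?f u0" "v = ?f v0" using uvS by blast
      have "?h u = u0" "?h v = v0" using uv finj by (simp_all add: inv_into_f_f)
      moreover have "dist u v = \<rho> * dist u0 v0" using uv \<rho> by simp
      ultimately show ?thesis using \<rho> by simp
    qed
    have Ysub: "?V \<inter> X \<subseteq> ?h ` ?S"
    proof
      fix y assume y: "y \<in> ?V \<inter> X"
      have "?f y \<in> ?S" using V_word[OF ifs nonneg wd a(1)] y by auto
      moreover have "?h (?f y) = y" using finj y by (simp add: inv_into_f_f)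
      ultimately show "y \<in> ?h ` ?S" by (metis image_eqI)
    qed
    have "?\<mu> (?V \<inter> X) \<le> (2 * (1/\<rho>)) ^ ?d * ?\<mu> ?S"
      by (rule lipschitz_image_measure_le[OF Sm _ hlip Vm Ysub]) (use \<rho> in auto)
    also have "?\<mu> ?S \<le> ?\<mu> (?V \<inter> ball x d)"
    proof (rule measure_mono_fmeasurable)
      show "?S \<subseteq> ?V \<inter> ball x d" using fX by blast
      show "?V \<inter> ball x d \<in> lmeasurable"
        by (rule bounded_set_imp_lmeasurable) (use Vset_borel[of l \<phi> z \<Psi>] in \<open>auto intro!: borel_imp_lebesgue\<close>)
    qed (use Sm in auto)
    then have "(2 * (1/\<rho>)) ^ ?d * ?\<mu> ?S \<le> (2 * (1/\<rho>)) ^ ?d * ?\<mu> (?V \<inter> ball x d)"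
      by (rule mult_left_mono) (use \<rho> in auto)
    finally have low: "?\<mu> (?V \<inter> X) \<le> (2 / \<rho>) ^ ?d * ?\<mu> (?V \<inter> ball x d)" by simp
    have mb: "?\<mu> (ball x d) = d ^ ?d * c1"
      unfolding c1_def using dpos content_ball_conv_unit_ball[of d x] by simp
    have "\<kappa> * ?\<mu> (ball x d) \<le> ?\<mu> (?V \<inter> X) / ((2 * D) ^ ?d * c1) * ?\<mu> (ball x d)"
      by (rule mult_right_mono) (auto simp: \<kappa>_def)
    also have "\<dots> = ?\<mu> (?V \<inter> X) / ((2 * D) ^ ?d * c1) * (d ^ ?d * c1)"
      by (simp only: mb)
    also have "\<dots> = ?\<mu> (?V \<inter> X) * (\<rho> / 2) ^ ?d"
      using c1 Dpos \<rho> unfolding d_def by (simp add: power_mult_distrib power_divide field_simps)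
    also have "\<dots> \<le> (2 / \<rho>) ^ ?d * ?\<mu> (?V \<inter> ball x d) * (\<rho> / 2) ^ ?d"
      by (rule mult_right_mono[OF low]) (use \<rho> in auto)
    also have "\<dots> = ?\<mu> (?V \<inter> ball x d)"
      using \<rho> by (simp add: power_divide field_simps)
    finally have lowV: "\<kappa> * ?\<mu> (ball x d) \<le> ?\<mu> (?V \<inter> ball x d)" .
    have Vbm: "?V \<inter> ball x d \<in> sets lebesgue"
      using Vset_borel[of l \<phi> z \<Psi>] by (auto intro!: borel_imp_lebesgue)
    have "?\<mu> ((X - ?V) \<inter> ball x d) \<le> ?\<mu> (ball x d - ?V \<inter> ball x d)"
    proof (rule measure_mono_fmeasurable)
      show "(X - ?V) \<inter> ball x d \<in> sets lebesgue"
        using compact_imp_closed[OF Xc(1)] Vset_borel[of l \<phi> z \<Psi>]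
        by (auto intro!: borel_imp_lebesgue sets.Diff borel_closed)
      show "ball x d - ?V \<inter> ball x d \<in> lmeasurable" using Vbm by (auto intro: fmeasurable_Diff)
    qed blast
    also have "\<dots> = ?\<mu> (ball x d) - ?\<mu> (?V \<inter> ball x d)"
      by (rule measurable_measure_Diff) (use Vbm in auto)
    also have "\<dots> \<le> (1 - \<kappa>) * ?\<mu> (ball x d)" using lowV by (simp add: algebra_simps)
    finally show "\<exists>d>0. d \<le> r \<and> ?\<mu> ((X - ?V) \<inter> ball x d) \<le> (1 - \<kappa>) * ?\<mu> (ball x d)"
      using dpos dr by blast
  qed
qed

lemma common_contraction:
  fixes \<phi> :: "nat \<Rightarrow> 'a::euclidean_space \<Rightarrow> 'a"
  assumes ifs: "IFS l \<phi>"
  obtains r0 where "0 \<le> r0" "r0 < 1" "\<And>i x y. i \<in> {1..l} \<Longrightarrow> dist (\<phi> i x) (\<phi> i y) \<le> r0 * dist x y"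
proof -
  have "\<forall>i\<in>{1..l}. \<exists>r. 0 \<le> r \<and> r < 1 \<and> (\<forall>x y. dist (\<phi> i x) (\<phi> i y) \<le> r * dist x y)"
    using ifs by (simp add: IFS_def is_contraction_def)
  then obtain rr where rr: "\<And>i. i \<in> {1..l} \<Longrightarrow> 0 \<le> rr i \<and> rr i < 1 \<and> (\<forall>x y. dist (\<phi> i x) (\<phi> i y) \<le> rr i * dist x y)"
    by metis
  have l1: "l \<ge> 1" using ifs by (simp add: IFS_def)
  define r0 where "r0 = Max (rr ` {1..l})"
  have ne: "rr ` {1..l} \<noteq> {}" using l1 by auto
  have "r0 < 1" unfolding r0_def using rr ne by (subst Max_less_iff) auto
  moreover have ge: "rr i \<le> r0" if "i \<in> {1..l}" for i unfolding r0_def using that by simp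
  moreover have "0 \<le> r0" using ge[of 1] rr[of 1] l1 by force
  moreover have "dist (\<phi> i x) (\<phi> i y) \<le> r0 * dist x y" if "i \<in> {1..l}" for i x y
  proof -
    have "dist (\<phi> i x) (\<phi> i y) \<le> rr i * dist x y" using rr that by blast
    also have "\<dots> \<le> r0 * dist x y" using ge[OF that] by (simp add: mult_right_mono)
    finally show ?thesis .
  qed
  ultimately show ?thesis using that by blast
qed

lemma word_lip:
  assumes r0: "0 \<le> r0" "\<And>i x y. i \<in> {1..l} \<Longrightarrow> dist (\<phi> i x) (\<phi> i y) \<le> r0 * dist x y"
    and a: "set a \<subseteq> {1..l}"
  shows "dist (phi_word \<phi> a x) (phi_word \<phi> a y) \<le> r0 ^ length a * dist x y"
  using a
proof (induction a)
  case Nil then show ?case by simp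
next
  case (Cons i a)
  have "dist (phi_word \<phi> (i # a) x) (phi_word \<phi> (i # a) y) \<le> r0 * dist (phi_word \<phi> a x) (phi_word \<phi> a y)"
    using r0(2)[of i] Cons.prems by simp
  also have "\<dots> \<le> r0 * (r0 ^ length a * dist x y)"
    using Cons by (intro mult_left_mono) (auto simp: r0)
  finally show ?case by simp
qed

lemma coding_conv:
  fixes \<phi> :: "nat \<Rightarrow> 'a::euclidean_space \<Rightarrow> 'a"
  assumes ifs: "IFS l \<phi>" and \<omega>: "\<forall>j. \<omega> j \<in> {1..l}"
  shows "(\<lambda>n. phi_word \<phi> (map \<omega> [0..<n]) 0) \<longlonglongrightarrow> coding \<phi> \<omega>"
proof -
  obtain r0 where r0: "0 \<le> r0" "r0 < 1" "\<And>i x y. i \<in> {1..l} \<Longrightarrow> dist (\<phi> i x) (\<phi> i y) \<le> r0 * dist x y"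
    using common_contraction[OF ifs] by blast
  define g where "g n = phi_word \<phi> (map \<omega> [0..<n]) 0" for n
  define M where "M = Max ((\<lambda>i. norm (\<phi> i 0)) ` {1..l})"
  have M: "norm (\<phi> i 0) \<le> M" if "i \<in> {1..l}" for i unfolding M_def using that by simp
  have step: "norm (g (Suc n) - g n) \<le> M * r0 ^ n" for n
  proof -
    have "g (Suc n) = phi_word \<phi> (map \<omega> [0..<n]) (\<phi> (\<omega> n) 0)"
      by (simp add: g_def phi_word_append)
    moreover have "g n = phi_word \<phi> (map \<omega> [0..<n]) 0" by (simp add: g_def)
    ultimately have "norm (g (Suc n) - g n) = dist (phi_word \<phi> (map \<omega> [0..<n]) (\<phi> (\<omega> n) 0)) (phi_word \<phi> (map \<omega> [0..<n]) 0)"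
      by (simp add: dist_norm)
    also have "\<dots> \<le> r0 ^ n * dist (\<phi> (\<omega> n) 0) 0"
    proof -
      have sa: "set (map \<omega> [0..<n]) \<subseteq> {1..l}" using \<omega> by auto
      show ?thesis using word_lip[where \<phi>=\<phi>, OF r0(1) r0(3) sa, of "\<phi> (\<omega> n) 0" 0] by (simp add: dist_norm)
    qed
    also have "\<dots> \<le> r0 ^ n * M" using M[of "\<omega> n"] \<omega> r0 by (intro mult_left_mono) auto
    finally show ?thesis by (simp add: mult.commute)
  qed
  have "summable (\<lambda>n. M * r0 ^ n)"
    using r0 by (intro summable_mult summable_geometric) auto
  then have sd: "summable (\<lambda>n. g (Suc n) - g n)"
    by (rule summable_comparison_test[rotated]) (use step in auto)
  have "(\<lambda>n. g 0 + (\<Sum>k<n. g (Suc k) - g k)) \<longlonglongrightarrow> g 0 + suminf (\<lambda>n. g (Suc n) - g n)"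
    by (intro tendsto_add tendsto_const summable_LIMSEQ[OF sd])
  then have "g \<longlonglongrightarrow> g 0 + suminf (\<lambda>n. g (Suc n) - g n)"
    by (simp add: sum_lessThan_telescope)
  then have "convergent g" by (auto simp: convergent_def)
  then have "g \<longlonglongrightarrow> lim g" by (simp add: convergent_LIMSEQ_iff)
  then show ?thesis by (simp add: g_def[abs_def] coding_def)
qed

lemma coding_shift:
  fixes \<phi> :: "nat \<Rightarrow> 'a::euclidean_space \<Rightarrow> 'a"
  assumes ifs: "IFS l \<phi>" and \<omega>: "\<forall>j. \<omega> j \<in> {1..l}"
  shows "coding \<phi> \<omega> = \<phi> (\<omega> 0) (coding \<phi> (shift \<omega>))"
proof -
  have \<omega>': "\<forall>j. shift \<omega> j \<in> {1..l}" using \<omega> by (simp add: shift_def)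
  have eq: "phi_word \<phi> (map \<omega> [0..<Suc n]) 0 = \<phi> (\<omega> 0) (phi_word \<phi> (map (shift \<omega>) [0..<n]) 0)" for n
  proof -
    have "map \<omega> [0..<Suc n] = \<omega> 0 # map (shift \<omega>) [0..<n]"
      by (simp add: shift_def map_upt_Suc del: upt_Suc)
    then show ?thesis by simp
  qed
  have lip: "dist (\<phi> (\<omega> 0) x) (\<phi> (\<omega> 0) y) \<le> dist x y" for x y
    using ifs \<omega> by (auto simp: IFS_def intro: contraction_lip)
  have "1-lipschitz_on UNIV (\<phi> (\<omega> 0))" by (auto simp: lipschitz_on_def lip)
  then have c: "continuous_on UNIV (\<phi> (\<omega> 0))" by (rule lipschitz_on_continuous_on)
  have "(\<lambda>n. \<phi> (\<omega> 0) (phi_word \<phi> (map (shift \<omega>) [0..<n]) 0)) \<longlonglongrightarrow> \<phi> (\<omega> 0) (coding \<phi> (shift \<omega>))"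
    using continuous_on_tendsto_compose[OF c coding_conv[OF ifs \<omega>']] by simp
  moreover have "(\<lambda>n. \<phi> (\<omega> 0) (phi_word \<phi> (map (shift \<omega>) [0..<n]) 0)) \<longlonglongrightarrow> coding \<phi> \<omega>"
    using coding_conv[OF ifs \<omega>] unfolding eq[symmetric] by (rule LIMSEQ_Suc)
  ultimately show ?thesis using LIMSEQ_unique by blast
qed

lemma coding_measurable:
  fixes \<phi> :: "nat \<Rightarrow> 'a::euclidean_space \<Rightarrow> 'a"
  assumes ifs: "IFS l \<phi>"
  shows "coding \<phi> \<in> borel_measurable (seq_space l)"
proof (rule borel_measurable_LIMSEQ_metric)
  fix n
  show "(\<lambda>\<omega>. phi_word \<phi> (map \<omega> [0..<n]) 0) \<in> borel_measurable (seq_space l)"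
  proof -
    have "(\<lambda>L. phi_word \<phi> L 0) \<in> count_space UNIV \<rightarrow>\<^sub>M (borel :: 'a measure)" by simp
    from measurable_compose[OF map_measurable this] show ?thesis by simp
  qed
next
  fix \<omega> assume "\<omega> \<in> space (seq_space l)"
  then show "(\<lambda>n. phi_word \<phi> (map \<omega> [0..<n]) 0) \<longlonglongrightarrow> coding \<phi> \<omega>"
    using coding_conv[OF ifs] by (simp add: space_seq_space)
qed



lemma part2_core:
  fixes l :: nat and \<phi> :: "nat \<Rightarrow> 'a::euclidean_space \<Rightarrow> 'a" and X :: "'a set"
    and z :: 'a and \<Psi> :: "nat list \<Rightarrow> real"
  assumes ifs: "IFS l \<phi>"
    and attr: "is_attractor l \<phi> X"
    and z: "z \<in> X"
    and nonneg: "\<forall>a\<in>words l. \<Psi> a \<ge> 0"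
    and wd: "weakly_decaying l \<Psi>"
    and maxlim: "(\<lambda>n. Max (\<Psi> ` words_n l n)) \<longlonglongrightarrow> 0"
    and erg: "shift_invariant_ergodic l m"
    and eqv: "\<forall>A\<in>sets borel. emeasure (distr m borel (coding \<phi>)) A = 0
                   \<longleftrightarrow> emeasure lebesgue (A \<inter> X) = 0"
    and pos: "emeasure lebesgue (W_set l \<phi> z \<Psi>) > 0"
  shows "negligible (X - Vset l \<phi> z \<Psi>)"
proof -
  let ?V = "Vset l \<phi> z \<Psi>"
  have ps: "prob_space m" and sm: "sets m = sets (seq_space l)"
    and shm: "shift \<in> m \<rightarrow>\<^sub>M m"
    and inv: "\<And>A. A \<in> sets m \<Longrightarrow> emeasure m (shift -` A \<inter> space m) = emeasure m A"
    and ergo: "\<And>A. A \<in> sets m \<Longrightarrow> shift -` A \<inter> space m = A \<Longrightarrow> emeasure m A = 0 \<or> emeasure m A = 1"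
    using erg by (auto simp: shift_invariant_ergodic_def)
  have fm: "finite_measure m" using ps by (rule prob_space.finite_measure)
  have spm: "space m = {\<omega>. \<forall>j. \<omega> j \<in> {1..l}}"
    using sets_eq_imp_space_eq[OF sm] by (simp add: space_seq_space)
  have cm: "coding \<phi> \<in> m \<rightarrow>\<^sub>M borel"
    by (subst measurable_cong_sets[OF sm refl]) (rule coding_measurable[OF ifs])
  define E where "E = coding \<phi> -` ?V \<inter> space m"
  have Em: "E \<in> sets m" unfolding E_def by (rule measurable_sets[OF cm Vset_borel])
  have sub: "shift -` E \<inter> space m \<subseteq> E"
  proof
    fix \<omega> assume "\<omega> \<in> shift -` E \<inter> space m"
    then have \<omega>: "\<omega> \<in> space m" "coding \<phi> (shift \<omega>) \<in> ?V" by (auto simp: E_def)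
    have \<omega>l: "\<forall>j. \<omega> j \<in> {1..l}" using \<omega>(1) spm by simp
    have i: "\<omega> 0 \<in> {1..l}" using \<omega>l by blast
    have lip: "\<And>x y. dist (\<phi> (\<omega> 0) x) (\<phi> (\<omega> 0) y) \<le> dist x y"
      using ifs i by (auto simp: IFS_def intro: contraction_lip)
    have "\<phi> (\<omega> 0) (coding \<phi> (shift \<omega>)) \<in> ?V"
      by (rule V_step[where \<phi>=\<phi> and i="\<omega> 0", OF nonneg wd i lip \<omega>(2)])
    then show "\<omega> \<in> E" using coding_shift[OF ifs \<omega>l] \<omega>(1) by (simp add: E_def)
  qed
  define P where "P n = ((\<lambda>A. shift -` A \<inter> space m) ^^ n) E" for n
  have P0: "P 0 = E" and PS: "\<And>n. P (Suc n) = shift -` P n \<inter> space m"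
    by (simp_all add: P_def)
  have Pm: "P n \<in> sets m" for n
    by (induction n) (auto simp: P0 PS Em intro: measurable_sets[OF shm])
  have Pmeas: "emeasure m (P n) = emeasure m E" for n
    by (induction n) (auto simp: P0 PS inv Pm)
  have Pdec: "P (Suc n) \<subseteq> P n" for n
  proof (induction n)
    case 0 then show ?case using sub by (simp add: P0 PS)
  next
    case (Suc n) then show ?case by (auto simp: PS[of "Suc n"] PS[of n])
  qed
  have PE: "P n \<subseteq> E" for n
    by (induction n) (use Pdec P0 in auto)
  define F where "F = (\<Inter>n. P n)"
  have Fm: "F \<in> sets m" unfolding F_def using Pm by auto
  have Finv: "shift -` F \<inter> space m = F"
  proof
    show "shift -` F \<inter> space m \<subseteq> F"
    proof
      fix \<omega> assume \<omega>: "\<omega> \<in> shift -` F \<inter> space m"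
      have "\<omega> \<in> P (Suc n)" for n using \<omega> by (simp add: F_def PS)
      then have "\<omega> \<in> P n" for n using Pdec by (cases n) auto
      then show "\<omega> \<in> F" by (simp add: F_def)
    qed
    show "F \<subseteq> shift -` F \<inter> space m"
    proof
      fix \<omega> assume \<omega>: "\<omega> \<in> F"
      then have "\<omega> \<in> P (Suc n)" for n by (simp add: F_def)
      then have "shift \<omega> \<in> P n" "\<omega> \<in> space m" for n by (simp_all add: PS)
      then show "\<omega> \<in> shift -` F \<inter> space m" by (simp add: F_def)
    qed
  qed
  have null: "E - P n \<in> null_sets m" for n
  proof (rule null_setsI)
    show "E - P n \<in> sets m" using Em Pm by auto
    have "measure m (E - P n) = measure m E - measure m (P n)"
      by (rule finite_measure.finite_measure_Diff[OF fm Em Pm PE])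
    also have "\<dots> = 0" using Pmeas[of n] by (simp add: finite_measure.emeasure_eq_measure[OF fm])
    finally show "emeasure m (E - P n) = 0"
      by (simp add: finite_measure.emeasure_eq_measure[OF fm])
  qed
  have EF: "E - F = (\<Union>n. E - P n)" by (auto simp: F_def)
  have "(\<Union>n. E - P n) \<in> null_sets m" by (rule null_sets_UN') (use null in auto)
  then have EFnull: "E - F \<in> null_sets m" by (simp only: EF)
  have "emeasure m (E - (E - F)) = emeasure m E"
    by (rule emeasure_Diff_null_set[OF EFnull Em])
  moreover have "E - (E - F) = F" using PE by (auto simp: F_def)
  ultimately have FE: "emeasure m F = emeasure m E" by simp
  have Xcl: "closed X" using attr by (auto simp: is_attractor_def compact_imp_closed)
  have Vm: "?V \<inter> X \<in> sets lebesgue"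
    by (rule borel_imp_lebesgue[OF sets.Int[OF Vset_borel borel_closed[OF Xcl]]])
  have WVX: "W_set l \<phi> z \<Psi> \<subseteq> ?V \<inter> X"
    using W_subset_V W_subset_X[OF attr z maxlim] by blast
  have "emeasure lebesgue (W_set l \<phi> z \<Psi>) \<le> emeasure lebesgue (?V \<inter> X)"
    by (rule emeasure_mono[OF WVX Vm])
  then have "emeasure lebesgue (?V \<inter> X) \<noteq> 0" using pos by auto
  then have "emeasure (distr m borel (coding \<phi>)) ?V \<noteq> 0" using eqv Vset_borel by blast
  then have "emeasure m E \<noteq> 0" by (simp add: emeasure_distr[OF cm Vset_borel] E_def)
  then have E1: "emeasure m E = 1" using ergo[OF Fm Finv] FE by auto
  have Cb: "UNIV - ?V \<in> sets borel" by (rule sets.Diff[OF _ Vset_borel]) simp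
  have "coding \<phi> -` (UNIV - ?V) \<inter> space m = space m - E" by (auto simp: E_def)
  moreover have "measure m (space m - E) = 0"
    using prob_space.prob_compl[OF ps Em] E1 by (simp add: finite_measure.emeasure_eq_measure[OF fm])
  ultimately have "emeasure (distr m borel (coding \<phi>)) (UNIV - ?V) = 0"
    by (simp add: emeasure_distr[OF cm Cb] finite_measure.emeasure_eq_measure[OF fm])
  then have "emeasure lebesgue ((UNIV - ?V) \<inter> X) = 0" using eqv Cb by blast
  moreover have "(UNIV - ?V) \<inter> X = X - ?V" by blast
  moreover have "X - ?V \<in> sets lebesgue"
    by (rule borel_imp_lebesgue[OF sets.Diff[OF borel_closed[OF Xcl] Vset_borel]])
  ultimately show ?thesis by (simp add: negligible_iff_null_sets null_setsI)
qed


theorem mainTheorem15: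
  fixes l :: nat and \<phi> :: "nat \<Rightarrow> 'a::euclidean_space \<Rightarrow> 'a" and X :: "'a set"
    and z :: 'a and \<Psi> :: "nat list \<Rightarrow> real"
  assumes ifs: "IFS l \<phi>"
    and attr: "is_attractor l \<phi> X"
    and z: "z \<in> X"
    and nonneg: "\<forall>a\<in>words l. \<Psi> a \<ge> 0"
    and wd: "weakly_decaying l \<Psi>"
    and maxlim: "(\<lambda>n. Max (\<Psi> ` words_n l n)) \<longlonglongrightarrow> 0"
  shows "((\<forall>i\<in>{1..l}. is_similarity (\<phi> i)) \<and> emeasure lebesgue (W_set l \<phi> z \<Psi>) > 0
            \<longrightarrow> (AE x in lebesgue. x \<in> X \<longrightarrow> x \<in> W_set l \<phi> z \<Psi>))
       \<and> ((\<exists>m. shift_invariant_ergodic l m \<and>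
               (\<forall>A\<in>sets borel. emeasure (distr m borel (coding \<phi>)) A = 0
                   \<longleftrightarrow> emeasure lebesgue (A \<inter> X) = 0))
            \<and> emeasure lebesgue (W_set l \<phi> z \<Psi>) > 0
            \<longrightarrow> (AE x in lebesgue. x \<in> X \<longrightarrow> x \<in> W_set l \<phi> z \<Psi>))"
proof -
  have VW: "negligible (Vset l \<phi> z \<Psi> - W_set l \<phi> z \<Psi>)"
    by (rule V_minus_W[OF nonneg maxlim])
  have fin: "AE x in lebesgue. x \<in> X \<longrightarrow> x \<in> W_set l \<phi> z \<Psi>"
    if XV: "negligible (X - Vset l \<phi> z \<Psi>)"
  proof -
    have "negligible ((X - Vset l \<phi> z \<Psi>) \<union> (Vset l \<phi> z \<Psi> - W_set l \<phi> z \<Psi>))"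
      using XV VW by (rule negligible_Un)
    moreover have "X - W_set l \<phi> z \<Psi> \<subseteq> (X - Vset l \<phi> z \<Psi>) \<union> (Vset l \<phi> z \<Psi> - W_set l \<phi> z \<Psi>)"
      by blast
    ultimately have "negligible (X - W_set l \<phi> z \<Psi>)" by (rule negligible_subset)
    then have N: "X - W_set l \<phi> z \<Psi> \<in> null_sets lebesgue" by (simp add: negligible_iff_null_sets)
    show ?thesis by (rule AE_I'[OF N]) blast
  qed
  show ?thesis
  proof (intro conjI impI)
    assume "(\<forall>i\<in>{1..l}. is_similarity (\<phi> i)) \<and> emeasure lebesgue (W_set l \<phi> z \<Psi>) > 0"
    then show "AE x in lebesgue. x \<in> X \<longrightarrow> x \<in> W_set l \<phi> z \<Psi>"
      using part1_core[OF ifs attr z nonneg wd maxlim] fin by blast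
  next
    assume "(\<exists>m. shift_invariant_ergodic l m \<and>
               (\<forall>A\<in>sets borel. emeasure (distr m borel (coding \<phi>)) A = 0
                   \<longleftrightarrow> emeasure lebesgue (A \<inter> X) = 0))
            \<and> emeasure lebesgue (W_set l \<phi> z \<Psi>) > 0"
    then obtain m where m: "shift_invariant_ergodic l m"
      "\<forall>A\<in>sets borel. emeasure (distr m borel (coding \<phi>)) A = 0
                   \<longleftrightarrow> emeasure lebesgue (A \<inter> X) = 0"
      and pos: "emeasure lebesgue (W_set l \<phi> z \<Psi>) > 0" by blast
    show "AE x in lebesgue. x \<in> X \<longrightarrow> x \<in> W_set l \<phi> z \<Psi>"
      by (rule fin[OF part2_core[OF ifs attr z nonneg wd maxlim m pos]])
  qed
qed

end
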